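(* Let $(x_i,y_i)_{i=1}^7$ be point pairs in $\mathbb P^2\times\mathbb P^2$ and suppose there is an invertible projective transformation $H$ of $\mathbb P^2$ with $Hx_i=y_i$ for all $i$. Then the $7\times 9$ matrix $Z$ with rows $x_i^\top\otimes y_i^\top$ is rank deficient.
   Context: Work over $\mathbb C$; $x^\top\otimes y^\top$ denotes the Kronecker product, and equality $Hx_i=y_i$ is in projective space. *)

theory Defs
  imports "HOL-Analysis.Analysis"
begin

text \<open>Points of P^2 over C are represented by nonzero vectors in C^3.
  Two vectors represent the same projective point iff both are nonzero and
  one is a nonzero scalar multiple of the other.\<close>
definition proj_eq :: "complex^3 \<Rightarrow> complex^3 \<Rightarrow> bool" where
  "proj_eq u v \<longleftrightarrow> u \<noteq> 0 \<and> v \<noteq> 0 \<and> (\<exists>c. c \<noteq> 0 \<and> u = c *s v)"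

text \<open>Kronecker product of two vectors in C^3, indexed by pairs (a,b),
  entry x_a * y_b (column ordering of a 9-vector is immaterial for rank).\<close>
definition kron3 :: "complex^3 \<Rightarrow> complex^3 \<Rightarrow> complex^(3 \<times> 3)" where
  "kron3 x y = (\<chi> p. x $ fst p * y $ snd p)"

definition Zmat :: "(7 \<Rightarrow> complex^3) \<Rightarrow> (7 \<Rightarrow> complex^3) \<Rightarrow> complex^(3 \<times> 3)^7" where
  "Zmat x y = (\<chi> i. kron3 (x i) (y i))"

end

theory Submission
  imports Defs
begin

definition wv :: "complex^3^3 \<Rightarrow> 3 \<Rightarrow> 3 \<Rightarrow> complex^(3 \<times> 3)" where
  "wv H a c = (\<chi> p. (if fst p = a then H $ snd p $ c else 0)
      + (if fst p = c \<and> a \<noteq> c then H $ snd p $ a else 0))"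

definition WS :: "complex^3^3 \<Rightarrow> (complex^(3 \<times> 3)) set" where
  "WS H = {wv H 1 1, wv H 2 2, wv H 3 3, wv H 1 2, wv H 1 3, wv H 2 3}"

lemma kron_eq:
  "kron3 x (H *v x) = (x$1*x$1) *s wv H 1 1 + (x$2*x$2) *s wv H 2 2 + (x$3*x$3) *s wv H 3 3
     + (x$1*x$2) *s wv H 1 2 + (x$1*x$3) *s wv H 1 3 + (x$2*x$3) *s wv H 2 3"
proof -
  have "kron3 x (H *v x) $ p = ((x$1*x$1) *s wv H 1 1 + (x$2*x$2) *s wv H 2 2 + (x$3*x$3) *s wv H 3 3
     + (x$1*x$2) *s wv H 1 2 + (x$1*x$3) *s wv H 1 3 + (x$2*x$3) *s wv H 2 3) $ p" for p
  proof -
    obtain a b where p: "p = (a, b)" by (cases p)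
    show ?thesis unfolding p
      using exhaust_3[of a]
      by (auto simp: kron3_def wv_def matrix_vector_mult_def sum_3 algebra_simps)
  qed
  then show ?thesis by (simp add: vec_eq_iff)
qed

lemma kron_span: "kron3 x (H *v x) \<in> vec.span (WS H)"
  unfolding kron_eq
  by (intro vec.span_add vec.span_scale vec.span_base) (auto simp: WS_def)

theorem mainTheorem18:
  fixes x y :: "7 \<Rightarrow> complex^3" and H :: "complex^3^3"
  assumes "\<And>i. x i \<noteq> 0" and "\<And>i. y i \<noteq> 0"
    and "invertible H"
    and "\<And>i. proj_eq (H *v x i) (y i)"
  shows "rank (Zmat x y) < 7"
proof -
  have "rows (Zmat x y) \<subseteq> vec.span (WS H)"
  proof
    fix r assume "r \<in> rows (Zmat x y)"
    then obtain i where r: "r = kron3 (x i) (y i)"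
      by (auto simp: rows_def row_def Zmat_def vec_lambda_eta)
    obtain c where c: "c \<noteq> 0" "H *v x i = c *s y i"
      using assms(4)[of i] by (auto simp: proj_eq_def)
    have "y i = inverse c *s (H *v x i)" using c by simp
    then have "r = inverse c *s kron3 (x i) (H *v x i)"
      by (simp add: r kron3_def vec_eq_iff algebra_simps)
    then show "r \<in> vec.span (WS H)" using kron_span by (simp add: vec.span_scale)
  qed
  then have "rank (Zmat x y) \<le> card (WS H)"
    unfolding row_rank_def_gen by (intro vec.dim_le_card) (auto simp: WS_def)
  also have "card (WS H) \<le> 6"
  proof -
    have "WS H = set [wv H 1 1, wv H 2 2, wv H 3 3, wv H 1 2, wv H 1 3, wv H 2 3]"
      by (simp add: WS_def)
    then show ?thesis using card_length[of "[wv H 1 1, wv H 2 2, wv H 3 3, wv H 1 2, wv H 1 3, wv H 2 3]"]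
      by simp
  qed
  finally show ?thesis by simp
qed

end
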